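(* Let $n\ge 2$ and let $V'=\{v_1<\dots<v_{n-1}\}$ be a set of $n-1$ positive integers with $\kappa(V')\ge\frac1n$. If $v_n$ is an integer with $v_n\ge n\,v_{n-1}$, then $V=V'\cup\{v_n\}$ satisfies $\kappa(V)\ge\frac{1}{n+1}$.
   Context: For $x\in\mathbb{R}$, $\|x\|=\min\{x-\lfloor x\rfloor,\lceil x\rceil-x\}$ denotes the distance from $x$ to the nearest integer. For a finite nonempty set $V$ of positive integers, $\kappa(V)=\sup_{t\in(0,1)}\min_{v\in V}\|tv\|$. *)

theory Defs
  imports "HOL-Analysis.Analysis"
begin

definition dist_nint :: "real \<Rightarrow> real" where
  "dist_nint x = min (x - of_int \<lfloor>x\<rfloor>) (of_int \<lceil>x\<rceil> - x)"

definition kappa :: "int set \<Rightarrow> real" where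
  "kappa V = (SUP t\<in>{0<..<1::real}. Min ((\<lambda>v. dist_nint (t * of_int v)) ` V))"

end

theory Submission
  imports Defs
begin

lemma dn_le: "dist_nint y \<le> \<bar>y - of_int k\<bar>"
proof -
  have c: "\<lceil>y\<rceil> \<le> \<lfloor>y\<rfloor> + 1" by linarith
  have a: "dist_nint y \<le> y - of_int \<lfloor>y\<rfloor>" and b: "dist_nint y \<le> of_int \<lceil>y\<rceil> - y"
    unfolding dist_nint_def by auto
  have "k \<le> \<lfloor>y\<rfloor> \<or> k \<ge> \<lceil>y\<rceil>" using c by linarith
  then show ?thesis
  proof
    assume "k \<le> \<lfloor>y\<rfloor>"
    then have "real_of_int k \<le> of_int \<lfloor>y\<rfloor>" by simp
    moreover have "of_int \<lfloor>y\<rfloor> \<le> y" by simp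
    ultimately show ?thesis using a by linarith
  next
    assume "k \<ge> \<lceil>y\<rceil>"
    then have "real_of_int k \<ge> of_int \<lceil>y\<rceil>" by simp
    moreover have "of_int \<lceil>y\<rceil> \<ge> y" by simp
    ultimately show ?thesis using b by linarith
  qed
qed

lemma dn_lip: "dist_nint x \<le> dist_nint y + \<bar>x - y\<bar>"
proof -
  have "dist_nint y = \<bar>y - of_int \<lfloor>y\<rfloor>\<bar> \<or> dist_nint y = \<bar>y - of_int \<lceil>y\<rceil>\<bar>"
    unfolding dist_nint_def
    using of_int_floor_le[of y] le_of_int_ceiling[of y] by (auto simp: min_def)
  then obtain k where "dist_nint y = \<bar>y - of_int k\<bar>" by blast
  moreover have "dist_nint x \<le> \<bar>x - of_int k\<bar>" by (rule dn_le)
  ultimately show ?thesis by linarith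
qed

lemma dn_half: "dist_nint x \<le> 1/2"
proof -
  have "\<lceil>x\<rceil> \<le> \<lfloor>x\<rfloor> + 1" by linarith
  then have "real_of_int \<lceil>x\<rceil> \<le> of_int \<lfloor>x\<rfloor> + 1" by linarith
  then show ?thesis unfolding dist_nint_def by linarith
qed

lemma dn_point:
  assumes "0 < c" "c \<le> 1/2"
  shows "\<exists>x. a \<le> x \<and> x \<le> a + 2*c \<and> dist_nint x \<ge> c"
proof (cases "dist_nint a \<ge> c")
  case True then show ?thesis by (intro exI[of _ a]) (use assms in auto)
next
  case False
  have kc: "dist_nint (of_int k + c) \<ge> c" for k :: int
  proof -
    have "\<lfloor>of_int k + c\<rfloor> = k" using assms by (simp add: floor_unique)
    moreover have "\<lceil>of_int k + c\<rceil> = k + 1" using assms by (intro ceiling_unique) auto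
    ultimately show ?thesis using assms unfolding dist_nint_def by simp
  qed
  from False have "a - of_int \<lfloor>a\<rfloor> < c \<or> of_int \<lceil>a\<rceil> - a < c"
    unfolding dist_nint_def by linarith
  then show ?thesis
  proof
    assume h: "a - of_int \<lfloor>a\<rfloor> < c"
    show ?thesis
    proof (rule exI[of _ "of_int \<lfloor>a\<rfloor> + c"], intro conjI)
      show "a \<le> of_int \<lfloor>a\<rfloor> + c" using h by linarith
      show "of_int \<lfloor>a\<rfloor> + c \<le> a + 2 * c" using of_int_floor_le[of a] assms by linarith
    qed (rule kc)
  next
    assume h: "of_int \<lceil>a\<rceil> - a < c"
    show ?thesis
    proof (rule exI[of _ "of_int \<lceil>a\<rceil> + c"], intro conjI)
      show "a \<le> of_int \<lceil>a\<rceil> + c" using le_of_int_ceiling[of a] assms by linarith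
      show "of_int \<lceil>a\<rceil> + c \<le> a + 2 * c" using h by linarith
    qed (rule kc)
  qed
qed

lemma bdd_g: "finite V \<Longrightarrow> V \<noteq> {} \<Longrightarrow>
  bdd_above ((\<lambda>t. Min ((\<lambda>v. dist_nint (t * of_int v)) ` V)) ` S)"
proof -
  assume f: "finite V" and ne: "V \<noteq> {}"
  then obtain v where "v \<in> V" by blast
  have "Min ((\<lambda>v. dist_nint (t * of_int v)) ` V) \<le> 1/2" for t
    using f \<open>v \<in> V\<close> dn_half by (meson Min_le finite_imageI image_eqI order_trans)
  then show ?thesis by (intro bdd_aboveI2[where M="1/2"]) auto
qed

lemma kappa_ge:
  assumes "finite V" "V \<noteq> {}" "t \<in> {0<..<1}" "\<forall>v\<in>V. dist_nint (t * of_int v) \<ge> c"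
  shows "kappa V \<ge> c"
proof -
  have "c \<le> Min ((\<lambda>v. dist_nint (t * of_int v)) ` V)"
    using assms by (subst Min_ge_iff) auto
  then show ?thesis unfolding kappa_def
    using assms bdd_g[OF assms(1,2)] by (intro cSUP_upper2) auto
qed

lemma kappa_witness:
  assumes "finite V" "V \<noteq> {}" "y < kappa V"
  shows "\<exists>t\<in>{0<..<1}. \<forall>v\<in>V. dist_nint (t * of_int v) > y"
proof -
  have "\<exists>t\<in>{0<..<1::real}. y < Min ((\<lambda>v. dist_nint (t * of_int v)) ` V)"
    using assms(3) unfolding kappa_def
    by (subst (asm) less_cSUP_iff) (use bdd_g[OF assms(1,2)] in auto)
  then show ?thesis using assms by (subst (asm) Min_gr_iff) auto
qed

theorem mainTheorem6:
  fixes n :: nat and V' :: "int set" and vn :: int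
  assumes "n \<ge> 2"
    and "finite V'" and "card V' = n - 1"
    and "\<forall>v\<in>V'. v > 0"
    and "kappa V' \<ge> 1 / real n"
    and "vn \<ge> int n * Max V'"
  shows "kappa (insert vn V') \<ge> 1 / (real n + 1)"
proof (rule ccontr)
  assume neg: "\<not> ?thesis"
  define N where "N = real n"
  have N2: "N \<ge> 2" using assms(1) unfolding N_def by simp
  define \<delta> where "\<delta> = (1 / (N + 1) - kappa (insert vn V')) / 2"
  have dpos: "\<delta> > 0" using neg unfolding \<delta>_def N_def by simp
  define c where "c = 1 / (N + 1) - \<delta>"
  have kc: "kappa (insert vn V') < c" 
  proof -
    have g: "\<And>a b::real. \<not> a \<le> b \<Longrightarrow> b < a - (a - b)/2" by (simp add: field_simps)
    show ?thesis unfolding c_def \<delta>_def N_def by (rule g[OF neg])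
  qed
  have ne: "V' \<noteq> {}" using assms(1,3) by auto
  define M where "M = Max V'"
  have MV: "M \<in> V'" using ne assms(2) unfolding M_def by simp
  have Mpos: "M > 0" using MV assms(4) by auto
  have vM: "v \<le> M" if "v \<in> V'" for v using that assms(2) unfolding M_def by simp
  have vnM: "real_of_int vn \<ge> N * of_int M"
  proof -
    have "real_of_int vn \<ge> of_int (int n * M)" using assms(6) unfolding M_def by linarith
    then show ?thesis unfolding N_def by simp
  qed
  have kV': "kappa V' \<ge> 1/N" using assms(5) unfolding N_def .
  have dsmall: "\<delta> < 1/(N+1)"
  proof -
    have "kappa (insert vn V') \<ge> 0"
    proof -
      obtain t where t: "t \<in> {0<..<1::real}" by (meson greaterThanLessThan_iff field_lbound_gt_zero zero_less_one)
      show ?thesis using kappa_ge[OF _ _ t, of "insert vn V'" 0] assms(2)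
        by (auto simp: dist_nint_def)
    qed
    moreover have "1/(N+1) > 0" using N2 by simp
    moreover have "\<And>a k::real. 0 \<le> k \<Longrightarrow> 0 < a \<Longrightarrow> (a - k)/2 < a" by (simp add: field_simps)
    ultimately show ?thesis unfolding \<delta>_def by blast
  qed
  have cpos: "c > 0" using dsmall unfolding c_def by simp
  have h12: "1/(N+1) \<le> 1/2" using N2 by (simp add: field_simps)
  have chalf: "c \<le> 1/2" using h12 dpos unfolding c_def by linarith
  obtain t0 where t0: "t0 \<in> {0<..<1}" and ht0: "\<forall>v\<in>V'. dist_nint (t0 * of_int v) > 1/N - \<delta>"
    using kappa_witness[OF assms(2) ne, of "1/N - \<delta>"] kV' dpos by auto
  define r where "r = 1 / (N * (N+1) * of_int M)"
  have rpos: "r > 0" using Mpos N2 unfolding r_def by simp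
  have rM: "r * of_int M = 1 / (N * (N+1))" using Mpos unfolding r_def by simp
  have NN: "N*(N+1) > 0" "N > 0" "N + 1 > 0" using N2 by auto
  have NN3: "N + N*N \<noteq> 0" using NN(1) by (simp add: distrib_left)
  have key0: "1/N - 1/(N*(N+1)) = 1/(N+1)"
  proof -
    have "1/N = (N+1)/(N*(N+1))" using NN by simp
    then have "1/N - 1/(N*(N+1)) = ((N+1) - 1)/(N*(N+1))" using diff_divide_distrib[of "N+1" 1 "N*(N+1)"] by linarith
    also have "\<dots> = N/(N*(N+1))" by simp
    also have "\<dots> = 1/(N+1)" using NN by simp
    finally show ?thesis .
  qed
  have key: "1/N - \<delta> - 1/(N*(N+1)) = c" unfolding c_def using key0 by linarith
  have dM: "dist_nint (t0 * of_int M) > 1/N - \<delta>" using ht0 MV by auto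
  have rlt: "1/(N*(N+1)) < 1/N - \<delta>" using key cpos by linarith
  have "dist_nint (t0 * of_int M) \<le> t0 * of_int M"
    using dn_le[of "t0 * of_int M" 0] t0 Mpos by simp
  then have "r * of_int M < t0 * of_int M" using dM rlt rM by linarith
  then have "r < t0" using Mpos by (meson mult_right_less_imp_less of_int_0_le_iff less_imp_le)
  then have lo: "t0 - r > 0" by simp
  have "dist_nint (t0 * of_int M) \<le> of_int M - t0 * of_int M"
    using dn_le[of "t0 * of_int M" M] t0 Mpos by (simp add: mult_left_le_one_le)
  then have "r * of_int M < (1 - t0) * of_int M" using dM rlt rM by (simp add: left_diff_distrib)
  then have "r < 1 - t0" using Mpos by (meson mult_right_less_imp_less of_int_0_le_iff less_imp_le)
  then have hi: "t0 + r < 1" by simp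
  have "N * of_int M > 0" using N2 Mpos by simp
  then have vnpos: "real_of_int vn > 0" using vnM by linarith
  have rvn: "r * of_int vn \<ge> 1/(N+1)"
  proof -
    have "r * of_int vn \<ge> r * (N * of_int M)" using vnM rpos by simp
    also have "r * (N * of_int M) = N * (r * of_int M)" by (simp add: ac_simps)
    also have "\<dots> = N * (1/(N*(N+1)))" using rM by simp
    also have "\<dots> = 1/(N+1)" using NN by simp
    finally show ?thesis .
  qed
  have cle: "c \<le> r * of_int vn" using rvn dpos unfolding c_def by linarith
  obtain x where x1: "(t0 - r) * of_int vn \<le> x" and x2: "x \<le> (t0 - r) * of_int vn + 2*c"
    and x3: "dist_nint x \<ge> c"
    using dn_point[OF cpos chalf] by blast
  define t where "t = x / of_int vn"
  have tx: "t * of_int vn = x" unfolding t_def using vnpos by simp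
  have t1: "t \<ge> t0 - r" unfolding t_def using x1 vnpos by (simp add: field_simps)
  have t2: "t \<le> t0 + r"
  proof -
    have "x \<le> (t0 + r) * of_int vn" using x2 cle by (simp add: algebra_simps)
    then show ?thesis unfolding t_def using vnpos by (simp add: field_simps)
  qed
  have tin: "t \<in> {0<..<1}" using t1 t2 lo hi by auto
  have "\<forall>v\<in>insert vn V'. dist_nint (t * of_int v) \<ge> c"
  proof
    fix v assume "v \<in> insert vn V'"
    then show "dist_nint (t * of_int v) \<ge> c"
    proof
      assume "v = vn" then show ?thesis using tx x3 by simp
    next
      assume v: "v \<in> V'"
      have vp: "real_of_int v > 0" using v assms(4) by simp
      have vle: "real_of_int v \<le> of_int M" using vM[OF v] by simp
      have "\<bar>t0 * of_int v - t * of_int v\<bar> = \<bar>t0 - t\<bar> * of_int v"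
        using vp by (simp add: abs_mult left_diff_distrib[symmetric])
      also have "\<dots> \<le> r * of_int M"
        using t1 t2 vp vle rpos by (intro mult_mono) auto
      finally have "\<bar>t0 * of_int v - t * of_int v\<bar> \<le> 1/(N*(N+1))" using rM by simp
      moreover have "dist_nint (t0 * of_int v) \<le> dist_nint (t * of_int v) + \<bar>t0 * of_int v - t * of_int v\<bar>"
        by (rule dn_lip)
      moreover have "dist_nint (t0 * of_int v) > 1/N - \<delta>" using ht0 v by auto
      ultimately show ?thesis using key by linarith
    qed
  qed
  then have "kappa (insert vn V') \<ge> c" using kappa_ge[OF _ _ tin] assms(2) by auto
  then show False using kc by simp
qed

end
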